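(* For all $n\ge1$, $\lfloor n/\varphi\rfloor+1\le f(n)\le\lfloor n\varphi\rfloor$, where $\varphi=(1+\sqrt5)/2$.
   Context: $\mathbb{N}=\{0,1,2,\dots\}$. The sequence $f:\mathbb{N}\to\mathbb{N}$ is defined greedily: $f(0)=0$, and for $n\ge1$, $f(n)$ is the least natural number such that (i) $f(n)\notin\{f(0),f(1),\dots,f(n-1)\}$ and (ii) $\sum_{1\le i\le n} f(i)$ is divisible by $n$. *)

theory Defs
  imports Complex_Main
begin

fun pref :: "nat \<Rightarrow> nat list" where
  "pref 0 = [0]"
| "pref (Suc n) = pref n @
     [LEAST m. m \<notin> set (pref n) \<and> Suc n dvd ((\<Sum>i\<in>{1..n}. pref n ! i) + m)]"

definition f :: "nat \<Rightarrow> nat" where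
  "f n = last (pref n)"

definition phi :: real where
  "phi = (1 + sqrt 5) / 2"

end

theory Submission imports Defs "HOL-Computational_Algebra.Primes"
begin


lemma sqrt5_bounds: "2 < sqrt (5::real)" "sqrt (5::real) < 3"
  by (rule real_less_rsqrt, simp) (rule real_less_lsqrt, simp_all)

lemma phi_gt: "phi > 3/2" and phi_lt: "phi < 2"
  using sqrt5_bounds by (auto simp: phi_def)

lemma phi_sq: "phi * phi = phi + 1"
proof -
  have "sqrt (5::real) * sqrt 5 = 5" by simp
  thus ?thesis by (simp add: phi_def algebra_simps)
qed

lemma phi_sq2: "phi * (phi * x) = phi * x + x" "x * (phi * phi) = x * phi + x"
  by (simp_all add: mult.assoc[symmetric] phi_sq algebra_simps)

lemma no_sq5: "(a::nat)^2 = 5 * c^2 \<Longrightarrow> c = 0"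
proof (induction a arbitrary: c rule: less_induct)
  case (less a)
  have p5: "prime (5::nat)"
  proof -
    have "{2..<5::nat} = {2,3,4}" by auto
    thus ?thesis by (simp add: prime_nat_iff')
  qed
  show ?case
  proof (cases "a = 0")
    case True thus ?thesis using less.prems by simp
  next
    case False
    have "5 dvd a^2" using less.prems by simp
    hence "5 dvd a" using p5 prime_dvd_power by blast
    then obtain d where d: "a = 5 * d" by blast
    hence "c^2 = 5 * d^2" using less.prems by (simp add: power_mult_distrib)
    hence "5 dvd c^2" by simp
    hence "5 dvd c" using p5 prime_dvd_power by blast
    then obtain e where e: "c = 5 * e" by blast
    hence "d^2 = 5 * e^2" using \<open>c^2 = 5 * d^2\<close> by (simp add: power_mult_distrib)
    moreover have "d < a" using d False by simp
    ultimately have "e = 0" using less.IH by blast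
    thus ?thesis using e by simp
  qed
qed

lemma irr: assumes "j \<ge> 1" shows "real j * phi \<noteq> real m"
proof
  assume h: "real j * phi = real m"
  hence h2: "real j * sqrt 5 = 2 * real m - real j" by (simp add: phi_def algebra_simps)
  have "real j * sqrt 5 \<ge> 0" by simp
  hence le: "j \<le> 2 * m" using h2 by linarith
  have "(real j * sqrt 5)^2 = 5 * (real j)^2" by (simp add: power_mult_distrib)
  hence "(real (2*m - j))^2 = 5 * (real j)^2" using h2 le by (simp add: of_nat_diff)
  hence "(2*m - j)^2 = 5 * j^2" by (metis of_nat_eq_iff of_nat_mult of_nat_numeral of_nat_power)
  hence "j = 0" by (rule no_sq5)
  thus False using assms by simp
qed



definition b :: "nat \<Rightarrow> nat" where "b m = nat \<lfloor>real m / phi\<rfloor>"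

lemma phi_pos: "phi > 0" using phi_gt by simp

lemma b_int: "int (b m) = \<lfloor>real m / phi\<rfloor>"
  using phi_pos by (simp add: b_def)

lemma b_lo: "real (b m) * phi \<le> real m"
proof -
  have "real_of_int \<lfloor>real m / phi\<rfloor> \<le> real m / phi" by (rule of_int_floor_le)
  hence "real (b m) \<le> real m / phi" using b_int by (metis of_int_of_nat_eq)
  thus ?thesis using phi_pos by (simp add: pos_le_divide_eq)
qed

lemma b_hi: "real m < (real (b m) + 1) * phi"
proof -
  have "real m / phi < real_of_int \<lfloor>real m / phi\<rfloor> + 1" by (rule real_of_int_floor_add_one_gt)
  hence "real m / phi < real (b m) + 1" using b_int by (metis of_int_of_nat_eq)
  thus ?thesis using phi_pos by (simp add: pos_divide_less_eq)
qed

lemma b_eqI: assumes "real j * phi \<le> real m" "real m < (real j + 1) * phi" shows "b m = j"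
proof -
  have "real j \<le> real m / phi" "real m / phi < real j + 1"
    using assms phi_pos by (simp_all add: pos_le_divide_eq pos_divide_less_eq)
  hence "\<lfloor>real m / phi\<rfloor> = int j" by (intro floor_unique) simp_all
  thus ?thesis by (simp add: b_def)
qed

lemma b_lo_strict: assumes "m \<ge> 1" shows "real (b m) * phi < real m"
proof (cases "b m = 0")
  case True thus ?thesis using assms by simp
next
  case False
  hence "real (b m) * phi \<noteq> real m" by (intro irr) simp
  thus ?thesis using b_lo[of m] by linarith
qed

lemma b_mono: "b m \<le> b (Suc m)"
  unfolding b_def using phi_pos by (intro nat_mono floor_mono divide_right_mono) auto

lemma b_step: "b (Suc m) \<le> b m + 1"
proof -
  have "real (b (Suc m)) * phi < (real (b m) + 2) * phi"
    using b_lo[of "Suc m"] b_hi[of m] phi_gt by (simp add: algebra_simps)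
  hence "real (b (Suc m)) < real (b m) + 2" using phi_pos by simp
  thus ?thesis by linarith
qed

lemma b_step2: "b (Suc (Suc m)) \<ge> b m + 1"
proof -
  have "(real (b m) + 1) * phi \<le> real (Suc (Suc m))"
    using b_lo[of m] phi_lt by (simp add: algebra_simps)
  hence "(real (b m) + 1) * phi < (real (b (Suc (Suc m))) + 1) * phi"
    using b_hi[of "Suc (Suc m)"] by linarith
  hence "real (b (Suc (Suc m))) + 1 > real (b m) + 1"
    using phi_pos by simp
  thus ?thesis by linarith
qed

lemma b_less: "m \<ge> 1 \<Longrightarrow> b m < m"
proof -
  assume "m \<ge> 1"
  have "real (b m) * phi \<le> real m" by (rule b_lo)
  moreover have "real (b m) * 1 \<le> real (b m) * phi" using phi_gt by (intro mult_left_mono) auto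
  moreover have "real (b m) * phi < real m" using b_lo_strict \<open>m\<ge>1\<close> by blast
  ultimately have "real (b m) * 1 < real m" by linarith
  thus ?thesis by simp
qed

lemma b0: "b 0 = 0" by (simp add: b_def)
lemma b1: "b 1 = 0" by (rule b_eqI) (use phi_gt in simp_all)

lemma mulp: "(x::real) \<le> y \<Longrightarrow> x * phi \<le> y * phi" "(x::real) < y \<Longrightarrow> x * phi < y * phi"
  "(x::real) \<le> y \<Longrightarrow> x * (2 - phi) \<le> y * (2 - phi)" "(x::real) < y \<Longrightarrow> x * (2-phi) < y * (2-phi)"
  using phi_pos phi_lt by (simp_all add: mult_right_mono)


lemma p2: "phi * (2 - phi) = phi - 1"
  using phi_sq by (simp add: algebra_simps)
lemma p3: "phi * phi = phi + 1" by (rule phi_sq)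

lemma K2:
  assumes k1: "k \<ge> 1" and jk: "b k = b (k - 1) + 1" and n1: "n \<ge> 1" and jn: "b n = b (n - 1)"
    and eq: "k + b k = b n + 1"
  shows False
proof -
  define j where "j = b k"
  define J where "J = b n"
  have h1: "real j * phi \<le> real k" using b_lo[of k] j_def by simp
  have h2: "real k - 1 < real j * phi"
    using b_hi[of "k-1"] jk k1 j_def by (simp add: of_nat_diff algebra_simps)
  have h3: "real J * phi \<le> real n - 1" using b_lo[of "n-1"] jn n1 J_def by (simp add: of_nat_diff)
  have h4: "real n < (real J + 1) * phi" using b_hi[of n] J_def by simp
  have JJ: "real J = real k + real j - 1" using eq j_def J_def by simp
  have a0: "real j * (phi * (2 - phi)) \<le> real k * (2 - phi)"
    using mulp(3)[OF h1] by (simp only: mult.assoc)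
  have a: "(real k + real j) * phi \<le> 2 * real k + real j"
    using a0 unfolding p2 by (simp only: right_diff_distrib distrib_right)
  have b0: "(real k - 1) * (2 - phi) < real j * (phi * (2 - phi))"
    using mulp(4)[OF h2] by (simp only: mult.assoc)
  have bb: "(real k + real j - 1) * phi > 2 * real k + real j - 2"
    using b0 unfolding p2 by (simp only: right_diff_distrib left_diff_distrib distrib_right)
  have "real n < 2 * real k + real j" using h4 a JJ by simp
  moreover have "real n - 1 > 2 * real k + real j - 2" using h3 bb JJ by simp
  ultimately have "n < 2*k + j" "n + 1 > 2*k+j" by linarith+
  thus False by simp
qed



lemma K1:
  assumes n2: "n \<ge> 2" and jn: "b n = b (n - 1) + 1" and jN: "b (Suc n) = b n + 1"
  shows "\<exists>k. 1 \<le> k \<and> k \<le> n \<and> b k = b (k - 1) + 1 \<and> k + b k = b n + 1"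
proof -
  define J where "J = b n"
  have JJ: "real J * phi * phi = real J * phi + real J" by (simp add: mult.assoc phi_sq distrib_left)
  have h1: "real n - 1 < real J * phi"
    using b_hi[of "n-1"] jn n2 J_def by (simp add: of_nat_diff algebra_simps)
  have h2: "real J * phi < real n" using b_lo_strict[of n] n2 J_def by simp
  have h3: "(real J + 1) * phi < real n + 1" using b_lo_strict[of "Suc n"] jN J_def by (simp add: add.commute)
  have h4: "real n < (real J + 1) * phi" using b_hi[of n] J_def by simp
  have m1: "real n * phi - phi < real J * phi + real J"
    using mulp(2)[OF h1] JJ phi_sq by (simp add: algebra_simps)
  have m2: "real J * phi + real J < real n * phi"
    using mulp(2)[OF h2] JJ phi_sq by (simp add: algebra_simps)
  have m3: "real J * phi + phi + real J + 1 < real n * phi + phi"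
    using mulp(2)[OF h3] JJ phi_sq by (simp add: algebra_simps)
  have m4: "real n * phi < real J * phi + phi + real J + 1"
    using mulp(2)[OF h4] JJ phi_sq by (simp add: algebra_simps)
  have "real J * 1 \<le> real J * phi" using phi_gt by (intro mult_left_mono) auto
  hence Jn: "J < n" using h2 by simp
  define k where "k = n - J"
  have rk: "real k = real n - real J" using Jn k_def by (simp add: of_nat_diff)
  have k1: "k \<ge> 1" using Jn k_def by simp
  have G4: "real k - 1 < (2 * real J + 1 - real n) * phi"
    using rk h1 m1 by (simp add: algebra_simps)
  have "(2 * real J + 1 - real n) * phi > 0" using G4 k1 by linarith
  hence "2 * real J + 1 - real n > 0" using phi_pos by (simp add: zero_less_mult_iff)
  hence nle: "n < 2*J+1" by linarith
  define j where "j = 2*J + 1 - n"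
  have rj: "real j = 2 * real J + 1 - real n" using nle j_def by (simp add: of_nat_diff)
  have G1': "(2 * real J + 1 - real n) * phi \<le> real n - real J" using m3 h3 by (simp add: algebra_simps)
  have G2': "real n - real J < (2 * real J + 1 - real n + 1) * phi" using h4 m1 by (simp add: algebra_simps)
  have G3': "(2 * real J + 1 - real n - 1) * phi \<le> real n - real J - 1" using m3 h2 by (simp add: algebra_simps)
  have G1: "real j * phi \<le> real k" using G1' unfolding rj rk .
  have G2: "real k < (real j + 1) * phi" using G2' unfolding rj rk .
  have G3: "(real j - 1) * phi \<le> real k - 1" using G3' unfolding rj rk .
  have j1: "j \<ge> 1" using nle j_def by simp
  have bk: "b k = j" using G1 G2 by (rule b_eqI)
  have bk1: "b (k - 1) = j - 1"
  proof (rule b_eqI)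
    have G4': "real k - 1 < real j * phi" using G4 unfolding rj .
    show "real (j - 1) * phi \<le> real (k - 1)" using G3 k1 j1 by (simp add: of_nat_diff)
    show "real (k - 1) < (real (j - 1) + 1) * phi" using G4' k1 j1 by (simp add: of_nat_diff)
  qed
  have e1: "b k = b (k - 1) + 1" using bk bk1 j1 by simp
  have e2: "k + b k = b n + 1" using bk j_def k_def J_def Jn nle by linarith
  have e3: "k \<le> n" using k_def by simp
  show ?thesis using k1 e1 e2 e3 by blast
qed



lemma b_mono_le: "m \<le> m' \<Longrightarrow> b m \<le> b m'"
  unfolding b_def using phi_pos by (intro nat_mono floor_mono divide_right_mono) auto

lemma b_cases: "b (Suc m) = b m \<or> b (Suc m) = b m + 1"
  using b_mono[of m] b_step[of m] by linarith

definition g :: "nat \<Rightarrow> nat" where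
  "g i = (if i = 0 then 0 else if b i = b (i - 1) + 1 then i + b i else b i + 1)"

lemma g_le: "g i \<le> i + b i"
  unfolding g_def by auto

lemma sumg: "(\<Sum>i\<in>{1..n}. g i) = n * (b n + 1)"
proof (induction n)
  case 0 thus ?case by simp
next
  case (Suc n)
  have "(\<Sum>i\<in>{1..Suc n}. g i) = n * (b n + 1) + g (Suc n)"
    using Suc by (simp add: sum.atLeast1_atMost_eq)
  also have "\<dots> = Suc n * (b (Suc n) + 1)"
    using b_cases[of n] by (auto simp: g_def algebra_simps)
  finally show ?case .
qed

lemma least_g:
  "(LEAST m. m \<notin> g ` {0..<Suc n} \<and> Suc n dvd n * (b n + 1) + m) = g (Suc n)"
proof -
  define N where "N = Suc n"
  define v where "v = b n + 1"
  have Nv: "N * v = n * v + v" using N_def by simp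
  have vn: "n \<ge> 1 \<Longrightarrow> v \<le> n" using b_less[of n] v_def by simp
  have low: "m \<notin> g ` {0..<N} \<Longrightarrow> N dvd n * v + m \<Longrightarrow> m < v \<Longrightarrow> False" for m
  proof -
    assume m1: "m \<notin> g ` {0..<N}" and m2: "N dvd n * v + m" and m3: "m < v"
    show False
    proof (cases "n = 0")
      case True
      hence "m = 0" using m3 v_def b0 by simp
      moreover have "g 0 \<in> g ` {0..<N}" using N_def by simp
      ultimately show False using m1 by (simp add: g_def)
    next
      case False
      have "(n * v + m) + (v - m) = N * v" using Nv m3 by simp
      hence "N dvd (n * v + m) + (v - m)" by simp
      hence "N dvd (v - m)" using m2 by (simp add: dvd_add_right_iff)
      hence "N \<le> v - m" using m3 by (intro dvd_imp_le) auto
      thus False using vn False N_def by simp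
    qed
  qed
  show ?thesis
  proof (cases "b N = b n")
    case nj: True
    have gN: "g N = v" using nj N_def v_def by (simp add: g_def)
    have unused: "v \<notin> g ` {0..<N}"
    proof
      assume "v \<in> g ` {0..<N}"
      then obtain i where i: "i < N" "g i = v" by auto
      show False
      proof (cases "i = 0")
        case True thus False using i v_def by (simp add: g_def)
      next
        case i0: False
        show False
        proof (cases "b i = b (i - 1) + 1")
          case True
          hence "i + b i = b N + 1" using i i0 nj v_def by (simp add: g_def)
          thus False using K2[of i N] True i0 nj N_def by simp
        next
          case False
          hence bi: "b i = b n" using i i0 v_def by (simp add: g_def)
          have bim: "b i = b (i - 1)" using False b_cases[of "i-1"] i0 by simp
          have "b (Suc (Suc (i - 1))) \<ge> b (i - 1) + 1" by (rule b_step2)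
          moreover have "b (Suc (Suc (i - 1))) \<le> b N" using i i0 by (intro b_mono_le) simp
          ultimately show False using bi bim nj by simp
        qed
      qed
    qed
    show ?thesis unfolding N_def[symmetric] v_def[symmetric] gN
    proof (rule Least_equality)
      show "v \<notin> g ` {0..<N} \<and> N dvd n * v + v" using unused Nv by (metis dvd_triv_left)
      show "\<And>m. m \<notin> g ` {0..<N} \<and> N dvd n * v + m \<Longrightarrow> v \<le> m"
        using low by (meson not_le)
    qed
  next
    case jmp: False
    hence bN: "b N = b n + 1" using b_cases[of n] N_def by simp
    have n1: "n \<ge> 1" using bN b0 b1 N_def by (cases n) auto
    have gN: "g N = N + v" using bN N_def v_def by (simp add: g_def)
    have unused: "N + v \<notin> g ` {0..<N}"
    proof
      assume "N + v \<in> g ` {0..<N}"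
      then obtain i where i: "i < N" "g i = N + v" by auto
      have "g i \<le> i + b i" by (rule g_le)
      moreover have "b i \<le> b n" using i N_def by (intro b_mono_le) simp
      ultimately show False using i N_def v_def by simp
    qed
    have used: "v \<in> g ` {0..<N}"
    proof (cases "b n = b (n - 1) + 1")
      case True
      have n2: "n \<ge> 2" using True n1 b1 by (cases "n = 1") auto
      obtain k where k: "1 \<le> k" "k \<le> n" "b k = b (k - 1) + 1" "k + b k = b n + 1"
        using K1[OF n2 True] bN N_def by auto
      have "g k = v" using k v_def by (simp add: g_def)
      moreover have "k \<in> {0..<N}" using k N_def by simp
      ultimately show ?thesis by force
    next
      case False
      have "g n = v" using False n1 v_def by (simp add: g_def)
      moreover have "n \<in> {0..<N}" using N_def by simp
      ultimately show ?thesis by force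
    qed
    show ?thesis unfolding N_def[symmetric] v_def[symmetric] gN
    proof (rule Least_equality)
      have "n * v + (N + v) = N * (v + 1)" using Nv by (simp add: algebra_simps)
      thus "N + v \<notin> g ` {0..<N} \<and> N dvd n * v + (N + v)" using unused by (metis dvd_triv_left)
      show "N + v \<le> m" if hm: "m \<notin> g ` {0..<N} \<and> N dvd n * v + m" for m
      proof (rule ccontr)
        assume "\<not> N + v \<le> m"
        hence mlt: "m < N + v" by simp
        show False
        proof (cases "m < v")
          case True thus False using low hm by blast
        next
          case False
          have "(n * v + v) + (m - v) = n * v + m" using False by simp
          hence "N dvd (N * v) + (m - v)" using hm Nv by simp
          hence "N dvd (m - v)" by (simp add: dvd_add_right_iff)
          moreover have "m - v < N" using mlt N_def by linarith
          ultimately have "m - v = 0" by (metis dvd_imp_le not_less neq0_conv)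
          hence "m = v" using False by simp
          thus False using hm used by simp
        qed
      qed
    qed
  qed
qed

lemma pref_g: "pref n = map g [0..<Suc n]"
proof (induction n)
  case 0 thus ?case by (simp add: g_def)
next
  case (Suc n)
  have s: "(\<Sum>i\<in>{1..n}. pref n ! i) = (\<Sum>i\<in>{1..n}. g i)"
    using Suc by (intro sum.cong) (auto simp del: upt_Suc)
  have st: "set (pref n) = g ` {0..<Suc n}" using Suc by (simp del: upt_Suc)
  have "pref (Suc n) = pref n @ [g (Suc n)]"
    using least_g[of n] by (simp only: pref.simps s st sumg)
  thus ?case using Suc by simp
qed

lemma f_g: "f n = g n"
  unfolding f_def pref_g by simp



theorem corollary5:
  fixes n :: nat
  assumes "n \<ge> 1"
  shows "\<lfloor>real n / phi\<rfloor> + 1 \<le> int (f n) \<and> int (f n) \<le> \<lfloor>real n * phi\<rfloor>"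
proof -
  have e1: "\<lfloor>real n / phi\<rfloor> = int (b n)" by (simp add: b_int)
  have "phi = 1 + 1 / phi" using phi_sq phi_pos by (simp add: field_simps)
  hence "real n * phi = real n * (1 + 1 / phi)" by simp
  hence "real n * phi = real_of_int (int n) + real n / phi" by (simp add: distrib_left)
  hence "\<lfloor>real n * phi\<rfloor> = int n + \<lfloor>real n / phi\<rfloor>" by (simp only: int_add_floor)
  hence e2: "\<lfloor>real n * phi\<rfloor> = int n + int (b n)" using e1 by simp
  have "b n + 1 \<le> g n \<and> g n \<le> n + b n" using assms by (auto simp: g_def)
  thus ?thesis using e1 e2 f_g by simp
qed


end
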